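(* Let $\mathcal{H}_A,\mathcal{H}_B$ be finite-dimensional Hilbert spaces with fixed reference bases $\{|i\rangle_A\}$, $\{|m\rangle_B\}$, and product basis on $\mathcal{H}_A\otimes\mathcal{H}_B$. For every state $\rho_{AB}$ with reduced state $\rho_B$, $$C_{l_1}(\rho_{AB})\geq C^{A|B}_{l_1}(\rho_{AB})+C_{l_1}(\rho_B).$$
   Context: For a state $\rho$ on a space with reference basis $\{|k\rangle\}$, $C_{l_1}(\rho)=\sum_{k\neq l}|\langle k|\rho|l\rangle|$ (for $\rho_{AB}$ the product basis is used). Writing $\rho_{AB}=\sum_{i,j}|i\rangle\langle j|_A\otimes\rho^B_{ij}$ with $\rho^B_{ij}=\langle i|\rho_{AB}|j\rangle_A$ operators on $\mathcal{H}_B$, the $l_1$ norm of IQ coherence is $C^{A|B}_{l_1}(\rho_{AB})=\sum_{i\neq j}\|\rho^B_{ij}\|_{\mathrm{tr}}$, where $\|X\|_{\mathrm{tr}}=\mathrm{Tr}\sqrt{X^\dagger X}$. *)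

theory Defs
  imports Complex_Main "Jordan_Normal_Form.Matrix"
begin

text \<open>Matrices are complex matrices w.r.t. the fixed reference bases.
  The product basis vector |i>_A |m>_B of H_A (x) H_B (dims dA, dB) has index i * dB + m.\<close>

definition ctrace :: "complex mat \<Rightarrow> complex" where
  "ctrace X = (\<Sum>k<dim_row X. X $$ (k, k))"

definition cadj :: "complex mat \<Rightarrow> complex mat" where
  "cadj X = mat (dim_col X) (dim_row X) (\<lambda>(i, j). cnj (X $$ (j, i)))"

definition psd_mat :: "nat \<Rightarrow> complex mat \<Rightarrow> bool" where
  "psd_mat n S \<longleftrightarrow> S \<in> carrier_mat n n \<and> cadj S = S \<and>
     (\<forall>v \<in> carrier_vec n. 0 \<le> Re (conjugate v \<bullet> (S *\<^sub>v v)))"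

definition density_mat :: "nat \<Rightarrow> complex mat \<Rightarrow> bool" where
  "density_mat n \<rho> \<longleftrightarrow> psd_mat n \<rho> \<and> ctrace \<rho> = 1"

definition msqrt :: "complex mat \<Rightarrow> complex mat" where
  "msqrt P = (THE S. psd_mat (dim_row P) S \<and> S * S = P)"

definition trace_norm :: "complex mat \<Rightarrow> real" where
  "trace_norm X = Re (ctrace (msqrt (cadj X * X)))"

definition C_l1 :: "complex mat \<Rightarrow> real" where
  "C_l1 \<rho> = (\<Sum>k<dim_row \<rho>. \<Sum>l<dim_row \<rho>. if k \<noteq> l then cmod (\<rho> $$ (k, l)) else 0)"

text \<open>Block rho^B_ij = <i|rho_AB|j>_A, an operator on H_B.\<close>
definition block_B :: "nat \<Rightarrow> complex mat \<Rightarrow> nat \<Rightarrow> nat \<Rightarrow> complex mat" where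
  "block_B dB \<rho> i j = mat dB dB (\<lambda>(m, n). \<rho> $$ (i * dB + m, j * dB + n))"

definition ptrace_A :: "nat \<Rightarrow> nat \<Rightarrow> complex mat \<Rightarrow> complex mat" where
  "ptrace_A dA dB \<rho> = mat dB dB (\<lambda>(m, n). \<Sum>i<dA. \<rho> $$ (i * dB + m, i * dB + n))"

definition C_l1_IQ :: "nat \<Rightarrow> nat \<Rightarrow> complex mat \<Rightarrow> real" where
  "C_l1_IQ dA dB \<rho> = (\<Sum>i<dA. \<Sum>j<dA. if i \<noteq> j then trace_norm (block_B dB \<rho> i j) else 0)"

end

theory Submission
  imports Defs "Jordan_Normal_Form.Schur_Decomposition"
begin


lemma cadj_dim[simp]: "dim_row (cadj X) = dim_col X" "dim_col (cadj X) = dim_row X"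
  by (auto simp: cadj_def)

lemma cadj_index[simp]: "i < dim_col X \<Longrightarrow> j < dim_row X \<Longrightarrow> cadj X $$ (i,j) = cnj (X $$ (j,i))"
  by (auto simp: cadj_def)

lemma cadj_carrier[simp]: "X \<in> carrier_mat n m \<Longrightarrow> cadj X \<in> carrier_mat m n"
  by auto

lemma cadj_cadj[simp]: "cadj (cadj X) = X"
  by (rule eq_matI) auto

lemma mult_entry:
  assumes "A \<in> carrier_mat n m" "B \<in> carrier_mat m p" "i < n" "j < p"
  shows "(A * B) $$ (i,j) = (\<Sum>k<m. A $$ (i,k) * B $$ (k,j))"
  using assms by (auto simp: scalar_prod_def lessThan_atLeast0)

lemma mult_carrier_sq: "X \<in> carrier_mat N N \<Longrightarrow> Y \<in> carrier_mat N N \<Longrightarrow> X * Y \<in> carrier_mat N N"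
  by auto

lemma cadj_mult:
  assumes "A \<in> carrier_mat n m" "B \<in> carrier_mat m p"
  shows "cadj (A * B) = cadj B * cadj A"
proof (rule eq_matI)
  fix i j assume ij: "i < dim_row (cadj B * cadj A)" "j < dim_col (cadj B * cadj A)"
  then have i: "i < p" and j: "j < n" using assms by auto
  have "cadj (A * B) $$ (i,j) = cnj ((A*B) $$ (j,i))" using assms i j by simp
  also have "\<dots> = (\<Sum>k<m. cnj (A $$ (j,k)) * cnj (B $$ (k,i)))"
    by (simp add: mult_entry[OF assms j i])
  also have "\<dots> = (cadj B * cadj A) $$ (i,j)"
    by (subst mult_entry[of _ p m _ n]) (use assms i j in \<open>auto simp: mult.commute intro!: sum.cong\<close>)
  finally show "cadj (A * B) $$ (i,j) = (cadj B * cadj A) $$ (i,j)" .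
qed (use assms in auto)

lemma cadj_four_block:
  assumes "A \<in> carrier_mat n1 m1" "B \<in> carrier_mat n1 m2" "C \<in> carrier_mat n2 m1" "D \<in> carrier_mat n2 m2"
  shows "cadj (four_block_mat A B C D) = four_block_mat (cadj A) (cadj C) (cadj B) (cadj D)"
  by (rule eq_matI) (use assms in auto)


lemma unitary_right:
  fixes U :: "complex mat"
  assumes "U \<in> carrier_mat n n" "cadj U * U = 1\<^sub>m n"
  shows "U * cadj U = 1\<^sub>m n"
  using mat_mult_left_right_inverse[of "cadj U" n U] assms by auto

lemma cinner_self:
  fixes w :: "complex vec"
  assumes "w \<in> carrier_vec N"
  shows "w \<bullet>c w = complex_of_real (\<Sum>k<N. (cmod (w $ k))\<^sup>2)"
proof -
  have "w $ k * cnj (w $ k) = complex_of_real ((cmod (w $ k))\<^sup>2)" for k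
    using complex_norm_square by metis
  thus ?thesis using assms by (auto simp: scalar_prod_def lessThan_atLeast0)
qed

lemma spectral:
  fixes A :: "complex mat"
  assumes "A \<in> carrier_mat n n" "cadj A = A"
  shows "\<exists>U. U \<in> carrier_mat n n \<and> cadj U * U = 1\<^sub>m n \<and>
     (\<forall>i<n. \<forall>j<n. i \<noteq> j \<longrightarrow> (cadj U * A * U) $$ (i,j) = 0) \<and>
     (\<forall>i<n. (cadj U * A * U) $$ (i,i) \<in> \<real>)"
  using assms
proof (induction n arbitrary: A)
  case 0
  show ?case by (rule exI[of _ "1\<^sub>m 0"]) (auto intro!: eq_matI)
next
  case (Suc n A)
  define N where "N = Suc n"
  let ?N = N
  have A: "A \<in> carrier_mat ?N ?N" and hA: "cadj A = A" using Suc.prems unfolding N_def by auto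
  have N0: "N > 0" unfolding N_def by simp
  obtain es where es: "char_poly A = (\<Prod>a\<leftarrow>es. [:- a, 1:])" "length es = ?N"
    using char_poly_factorized[OF A] by blast
  then obtain e rest where es_eq: "es = e # rest" by (cases es) (auto simp: N_def)
  have "poly (char_poly A) e = 0" unfolding es(1) es_eq by simp
  hence ev: "eigenvalue A e" using eigenvalue_root_char_poly[OF A] by simp
  define v where "v = find_eigenvector A e"
  from find_eigenvector[OF A ev] have "eigenvector A v e" unfolding v_def .
  hence v: "v \<in> carrier_vec ?N" and v0: "v \<noteq> 0\<^sub>v ?N" and Av: "A *\<^sub>v v = e \<cdot>\<^sub>v v"
    using A unfolding eigenvector_def by auto
  interpret cof_vec_space ?N "TYPE(complex)" .
  define b where "b = basis_completion v"
  from basis_completion[OF v v0, folded b_def]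
  have dist_b: "distinct b" and indep: "\<not> lin_dep (set b)" and bc: "set b \<subseteq> carrier_vec ?N"
    and hdb: "hd b = v" and len_b: "length b = ?N" by auto
  from hdb len_b obtain vs where bv: "b = v # vs" by (cases b) (use N0 in auto)
  define ws where "ws = gram_schmidt ?N b"
  from gram_schmidt_result[OF bc dist_b indep refl, folded ws_def]
  have wsc: "set ws \<subseteq> carrier_vec ?N" and corth: "corthogonal ws" and len_ws: "length ws = ?N"
    by (auto simp: len_b)
  from gram_schmidt_hd[OF v, of vs, folded bv] have "hd ws = v" unfolding ws_def .
  hence ws0: "ws ! 0 = v" using len_ws N0 by (cases ws) auto
  define nrm where "nrm j = (\<Sum>k<?N. (cmod (ws ! j $ k))\<^sup>2)" for j
  have wsj: "ws ! j \<in> carrier_vec ?N" if "j < ?N" for j using wsc len_ws that by auto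
  have nrm_eq: "ws ! j \<bullet>c ws ! j = complex_of_real (nrm j)" if "j < ?N" for j
    using cinner_self[OF wsj[OF that]] unfolding nrm_def by simp
  have nrm_pos: "nrm j > 0" if "j < ?N" for j
  proof -
    have "ws ! j \<bullet>c ws ! j \<noteq> 0" using corthogonalD[OF corth, of j j] that len_ws by auto
    hence "nrm j \<noteq> 0" using nrm_eq[OF that] by auto
    moreover have "nrm j \<ge> 0" unfolding nrm_def by (rule sum_nonneg) simp
    ultimately show ?thesis by auto
  qed
  define U0 where "U0 = mat ?N ?N (\<lambda>(i,j). ws ! j $ i / complex_of_real (sqrt (nrm j)))"
  have U0: "U0 \<in> carrier_mat ?N ?N" unfolding U0_def by auto
  have U0U0: "cadj U0 * U0 = 1\<^sub>m ?N"
  proof (rule eq_matI)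
    fix i j assume "i < dim_row (1\<^sub>m ?N)" "j < dim_col (1\<^sub>m ?N)"
    hence i: "i < ?N" and j: "j < ?N" by auto
    have "(cadj U0 * U0) $$ (i,j) = (\<Sum>k<?N. cnj (ws ! i $ k) * ws ! j $ k) /
        (complex_of_real (sqrt (nrm i)) * complex_of_real (sqrt (nrm j)))"
      by (subst mult_entry[of _ ?N ?N _ ?N]) (use U0 i j in \<open>auto simp: U0_def sum_divide_distrib intro!: sum.cong\<close>)
    also have "(\<Sum>k<?N. cnj (ws ! i $ k) * ws ! j $ k) = ws ! j \<bullet>c ws ! i"
      using wsj[OF i] wsj[OF j] by (auto simp: scalar_prod_def lessThan_atLeast0 mult.commute)
    finally have eq: "(cadj U0 * U0) $$ (i,j) = ws ! j \<bullet>c ws ! i /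
        (complex_of_real (sqrt (nrm i)) * complex_of_real (sqrt (nrm j)))" .
    show "(cadj U0 * U0) $$ (i,j) = 1\<^sub>m ?N $$ (i,j)"
    proof (cases "i = j")
      case True
      have "sqrt (nrm j) * sqrt (nrm j) = nrm j" using nrm_pos[OF j] by simp
      hence "complex_of_real (sqrt (nrm j)) * complex_of_real (sqrt (nrm j)) = complex_of_real (nrm j)"
        by (metis of_real_mult)
      then show ?thesis using eq True nrm_eq[OF j] nrm_pos[OF j] i by simp
    next
      case False
      then show ?thesis using eq corthogonalD[OF corth, of j i] i j len_ws by simp
    qed
  qed (use U0 in auto)
  define c0 where "c0 = complex_of_real (sqrt (nrm 0))"
  have AU0: "(A * U0) $$ (k,0) = e * U0 $$ (k,0)" if k: "k < N" for k
  proof -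
    have "(A * U0) $$ (k,0) = (\<Sum>l<N. A $$ (k,l) * v $ l) / c0"
      by (subst mult_entry[OF A U0 k N0]) (use N0 ws0 in \<open>auto simp: U0_def c0_def sum_divide_distrib intro!: sum.cong\<close>)
    also have "(\<Sum>l<N. A $$ (k,l) * v $ l) = (A *\<^sub>v v) $ k"
      using A v k by (auto simp: scalar_prod_def lessThan_atLeast0)
    also have "\<dots> = e * v $ k" using Av v k by simp
    finally show ?thesis using N0 ws0 k by (simp add: U0_def c0_def)
  qed
  define A' where "A' = cadj U0 * A * U0"
  have A': "A' \<in> carrier_mat N N" unfolding A'_def using U0 A by auto
  have hA': "cadj A' = A'"
  proof -
    have c1: "cadj U0 * A \<in> carrier_mat N N" using U0 A by auto
    have "cadj (cadj U0 * A * U0) = cadj U0 * cadj (cadj U0 * A)"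
      using cadj_mult[OF c1 U0] .
    also have "cadj (cadj U0 * A) = cadj A * U0" using cadj_mult[of "cadj U0" N N A N] U0 A by simp
    finally show ?thesis unfolding A'_def using hA U0 A
      by (metis assoc_mult_mat cadj_carrier)
  qed
  have A'col: "A' $$ (i,0) = (if i = 0 then e else 0)" if i: "i < N" for i
  proof -
    have "A' = cadj U0 * (A * U0)" unfolding A'_def using U0 A by (metis assoc_mult_mat cadj_carrier)
    hence "A' $$ (i,0) = (\<Sum>k<N. cadj U0 $$ (i,k) * (e * U0 $$ (k,0)))"
      using mult_entry[of "cadj U0" N N "A * U0" N i 0] U0 A i N0 AU0 by simp
    also have "\<dots> = e * (cadj U0 * U0) $$ (i,0)"
      by (subst mult_entry[of _ N N _ N]) (use U0 i N0 in \<open>auto simp: sum_distrib_left intro!: sum.cong\<close>)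
    finally show ?thesis using U0U0 i N0 by simp
  qed
  have A'row: "A' $$ (0,j) = (if j = 0 then cnj e else 0)" if j: "j < N" for j
  proof -
    have "A' $$ (0,j) = cadj A' $$ (0,j)" using hA' by simp
    also have "\<dots> = cnj (A' $$ (j,0))" using A' j N0 by simp
    finally show ?thesis using A'col[OF j] by simp
  qed
  have e_real: "cnj e = e" using A'row[OF N0] A'col[OF N0] by simp
  define A3 where "A3 = mat n n (\<lambda>(i,j). A' $$ (Suc i, Suc j))"
  have A3: "A3 \<in> carrier_mat n n" unfolding A3_def by auto
  have hA3: "cadj A3 = A3"
  proof (rule eq_matI)
    fix i j assume "i < dim_row A3" "j < dim_col A3"
    hence i: "i < n" and j: "j < n" using A3 by auto
    have "cadj A3 $$ (i,j) = cnj (A' $$ (Suc j, Suc i))" using i j by (simp add: A3_def)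
    also have "\<dots> = cadj A' $$ (Suc i, Suc j)" using A' i j by (simp add: N_def)
    finally show "cadj A3 $$ (i,j) = A3 $$ (i,j)" using hA' i j by (simp add: A3_def)
  qed (use A3 in auto)
  from Suc.IH[OF A3 hA3] obtain U3 where U3: "U3 \<in> carrier_mat n n" and U3U3: "cadj U3 * U3 = 1\<^sub>m n"
    and U3off: "\<forall>i<n. \<forall>j<n. i \<noteq> j \<longrightarrow> (cadj U3 * A3 * U3) $$ (i,j) = 0"
    and U3diag: "\<forall>i<n. (cadj U3 * A3 * U3) $$ (i,i) \<in> \<real>" by blast
  define E where "E = mat 1 1 (\<lambda>_. e)"
  have E: "E \<in> carrier_mat 1 1" unfolding E_def by auto
  have A'blk: "A' = four_block_mat E (0\<^sub>m 1 n) (0\<^sub>m n 1) A3"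
  proof (rule eq_matI)
    fix i j assume "i < dim_row (four_block_mat E (0\<^sub>m 1 n) (0\<^sub>m n 1) A3)"
       "j < dim_col (four_block_mat E (0\<^sub>m 1 n) (0\<^sub>m n 1) A3)"
    hence i: "i < N" and j: "j < N" using E A3 by (auto simp: N_def)
    show "A' $$ (i,j) = four_block_mat E (0\<^sub>m 1 n) (0\<^sub>m n 1) A3 $$ (i,j)"
    proof (cases "i = 0 \<or> j = 0")
      case True
      then show ?thesis using A'col[OF i] A'row[OF j] e_real i j E A3 by (auto simp: E_def N_def)
    next
      case False
      then obtain i' j' where "i = Suc i'" "j = Suc j'" by (cases i; cases j) auto
      then show ?thesis using i j E A3 by (auto simp: A3_def N_def)
    qed
  qed (use A' E A3 in \<open>auto simp: N_def\<close>)
  define U1 where "U1 = four_block_mat (1\<^sub>m 1) (0\<^sub>m 1 n) (0\<^sub>m n 1) U3"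
  have U1: "U1 \<in> carrier_mat N N" unfolding U1_def N_def using U3 by auto
  have cU1: "cadj U1 = four_block_mat (1\<^sub>m 1) (0\<^sub>m 1 n) (0\<^sub>m n 1) (cadj U3)"
    unfolding U1_def by (subst cadj_four_block[of _ 1 1 _ n _ n]) (use U3 in \<open>auto intro!: eq_matI\<close>)
  have U1U1: "cadj U1 * U1 = 1\<^sub>m N"
  proof -
    have "cadj U1 * U1 = four_block_mat (1\<^sub>m 1) (0\<^sub>m 1 n) (0\<^sub>m n 1) (cadj U3) * four_block_mat (1\<^sub>m 1) (0\<^sub>m 1 n) (0\<^sub>m n 1) U3"
      unfolding cU1 by (simp add: U1_def)
    also have "\<dots> = four_block_mat (1\<^sub>m 1) (0\<^sub>m 1 n) (0\<^sub>m n 1) (1\<^sub>m n)"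
      by (subst mult_four_block_mat[of _ 1 1 _ n _ n _ _ 1 _ n]) (use U3 U3U3 in auto)
    finally show ?thesis by (simp add: N_def)
  qed
  define U where "U = U0 * U1"
  have U: "U \<in> carrier_mat N N" unfolding U_def using U0 U1 by auto
  have cU: "cadj U = cadj U1 * cadj U0" unfolding U_def using cadj_mult[OF U0 U1] .
  have cU0U0U1: "cadj U0 * (U0 * U1) = U1"
    using assoc_mult_mat[of "cadj U0" N N U0 N U1 N] U0U0 U0 U1 by simp
  have UU: "cadj U * U = 1\<^sub>m N"
  proof -
    have "cadj U * U = cadj U1 * (cadj U0 * (U0 * U1))"
      unfolding cU unfolding U_def using U0 U1 by (simp add: assoc_mult_mat[of _ N N _ N _ N])
    thus ?thesis using cU0U0U1 U1U1 by simp
  qed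
  have UAU: "cadj U * A * U = cadj U1 * A' * U1"
  proof -
    have c: "cadj U0 * A \<in> carrier_mat N N" "U0 * U1 \<in> carrier_mat N N" using U0 U1 A by auto
    have "cadj U * A * U = cadj U1 * (cadj U0 * A) * (U0 * U1)"
      unfolding cU unfolding U_def using U0 U1 A assoc_mult_mat[of "cadj U1" N N "cadj U0" N A N] by simp
    also have "\<dots> = cadj U1 * ((cadj U0 * A) * (U0 * U1))"
      using assoc_mult_mat[of "cadj U1" N N "cadj U0 * A" N "U0 * U1" N] c U1 by simp
    also have "(cadj U0 * A) * (U0 * U1) = cadj U0 * (A * (U0 * U1))"
      using assoc_mult_mat[of "cadj U0" N N A N "U0 * U1" N] c U0 A by simp
    finally have "cadj U * A * U = cadj U1 * (cadj U0 * (A * (U0 * U1)))" .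
    also have "cadj U0 * (A * (U0 * U1)) = A' * U1"
      unfolding A'_def using c U0 U1 A assoc_mult_mat[of "cadj U0 * A" N N U0 N U1 N]
        assoc_mult_mat[of "cadj U0" N N A N "U0 * U1" N] by simp
    also have "cadj U1 * (A' * U1) = cadj U1 * A' * U1"
      using U1 A' assoc_mult_mat[of "cadj U1" N N A' N U1 N] by simp
    finally show ?thesis .
  qed
  have blk: "cadj U1 * A' * U1 = four_block_mat E (0\<^sub>m 1 n) (0\<^sub>m n 1) (cadj U3 * A3 * U3)"
  proof -
    have "cadj U1 * A' = four_block_mat E (0\<^sub>m 1 n) (0\<^sub>m n 1) (cadj U3 * A3)"
      unfolding cU1 A'blk
      by (subst mult_four_block_mat[of _ 1 1 _ n _ n _ _ 1 _ n]) (use U3 A3 E in auto)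
    hence "cadj U1 * A' * U1 = four_block_mat E (0\<^sub>m 1 n) (0\<^sub>m n 1) (cadj U3 * A3) * four_block_mat (1\<^sub>m 1) (0\<^sub>m 1 n) (0\<^sub>m n 1) U3"
      by (simp add: U1_def)
    also have "\<dots> = four_block_mat E (0\<^sub>m 1 n) (0\<^sub>m n 1) (cadj U3 * A3 * U3)"
      by (subst mult_four_block_mat[of _ 1 1 _ n _ n _ _ 1 _ n]) (use U3 A3 E in auto)
    finally show ?thesis .
  qed
  show ?case
  proof (intro exI[of _ U] conjI allI impI)
    show "U \<in> carrier_mat (Suc n) (Suc n)" using U N_def by simp
    show "cadj U * U = 1\<^sub>m (Suc n)" using UU N_def by simp
  next
    fix i j assume i: "i < Suc n" and j: "j < Suc n" and ij: "i \<noteq> j"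
    show "(cadj U * A * U) $$ (i,j) = 0"
      unfolding UAU blk using i j ij U3 A3 E U3off
      by (cases i; cases j) (auto simp: E_def)
  next
    fix i assume i: "i < Suc n"
    show "(cadj U * A * U) $$ (i,i) \<in> \<real>"
      unfolding UAU blk using i U3 A3 E U3diag e_real
      by (cases i) (auto simp: E_def Reals_cnj_iff)
  qed
qed


definition Dg :: "nat \<Rightarrow> (nat \<Rightarrow> real) \<Rightarrow> complex mat" where
  "Dg n d = mat n n (\<lambda>(i,j). if i = j then complex_of_real (d i) else 0)"

lemma Dg_carrier[simp]: "Dg n d \<in> carrier_mat n n"
  by (simp add: Dg_def)

lemma Dg_dim[simp]: "dim_row (Dg n d) = n" "dim_col (Dg n d) = n"
  by (auto simp: Dg_def)

lemma Dg_index[simp]: "i < n \<Longrightarrow> j < n \<Longrightarrow> Dg n d $$ (i,j) = (if i = j then complex_of_real (d i) else 0)"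
  by (simp add: Dg_def)

lemma cadj_Dg[simp]: "cadj (Dg n d) = Dg n d"
  by (rule eq_matI) (auto simp: Dg_def)

lemma Dg_mult: "Dg n a * Dg n b = Dg n (\<lambda>k. a k * b k)"
proof (rule eq_matI)
  fix i j assume "i < dim_row (Dg n (\<lambda>k. a k * b k))" "j < dim_col (Dg n (\<lambda>k. a k * b k))"
  hence i: "i < n" and j: "j < n" by (auto simp: Dg_def)
  have "(Dg n a * Dg n b) $$ (i,j) = (\<Sum>k<n. (if i = k then complex_of_real (a i) else 0) * (if k = j then complex_of_real (b k) else 0))"
    by (subst mult_entry[of _ n n _ n]) (use i j in \<open>auto intro!: sum.cong\<close>)
  also have "\<dots> = (\<Sum>k<n. if k = i then (if i = j then complex_of_real (a i * b i) else 0) else 0)"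
    by (rule sum.cong) auto
  also have "\<dots> = (if i = j then complex_of_real (a i * b i) else 0)"
    using i by (subst sum.delta) auto
  finally show "(Dg n a * Dg n b) $$ (i,j) = Dg n (\<lambda>k. a k * b k) $$ (i,j)" using i j by simp
qed (auto simp: Dg_def)

lemma VDg_entry:
  assumes V: "V \<in> carrier_mat n n" and i: "i < n" and k: "k < n"
  shows "(V * Dg n c) $$ (i,k) = V $$ (i,k) * complex_of_real (c k)"
proof -
  have "(V * Dg n c) $$ (i,k) = (\<Sum>l<n. V $$ (i,l) * Dg n c $$ (l,k))"
    by (rule mult_entry[OF V Dg_carrier i k])
  also have "\<dots> = (\<Sum>l<n. if l = k then V $$ (i,k) * complex_of_real (c k) else 0)"
    by (rule sum.cong) (use k in auto)
  also have "\<dots> = V $$ (i,k) * complex_of_real (c k)" using k by (subst sum.delta) auto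
  finally show ?thesis .
qed

lemma VDgV_entry:
  assumes V: "V \<in> carrier_mat n n" and i: "i < n" and j: "j < n"
  shows "(V * Dg n c * cadj V) $$ (i,j) = (\<Sum>k<n. V $$ (i,k) * complex_of_real (c k) * cnj (V $$ (j,k)))"
proof -
  have c1: "V * Dg n c \<in> carrier_mat n n" using V by auto
  show ?thesis
    by (subst mult_entry[OF c1 cadj_carrier[OF V] i j]) (use V i j in \<open>auto simp: VDg_entry simp del: index_mult_mat intro!: sum.cong\<close>)
qed

lemma spectral2:
  fixes A :: "complex mat"
  assumes A: "A \<in> carrier_mat n n" and hA: "cadj A = A"
  shows "\<exists>V d. V \<in> carrier_mat n n \<and> cadj V * V = 1\<^sub>m n \<and> V * cadj V = 1\<^sub>m n \<and>
     cadj V * A * V = Dg n d \<and> A = V * Dg n d * cadj V"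
proof -
  obtain U where U: "U \<in> carrier_mat n n" and UU: "cadj U * U = 1\<^sub>m n"
    and off: "\<forall>i<n. \<forall>j<n. i \<noteq> j \<longrightarrow> (cadj U * A * U) $$ (i,j) = 0"
    and dg: "\<forall>i<n. (cadj U * A * U) $$ (i,i) \<in> \<real>"
    using spectral[OF A hA] by blast
  have UU': "U * cadj U = 1\<^sub>m n" using unitary_right[OF U UU] .
  define d where "d k = Re ((cadj U * A * U) $$ (k,k))" for k
  have B: "cadj U * A * U = Dg n d"
  proof (rule eq_matI)
    fix i j assume "i < dim_row (Dg n d)" "j < dim_col (Dg n d)"
    hence i: "i < n" and j: "j < n" by (auto simp: Dg_def)
    show "(cadj U * A * U) $$ (i,j) = Dg n d $$ (i,j)"
    proof (cases "i = j")
      case True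
      then show ?thesis using dg i j by (auto simp: d_def Reals_cnj_iff complex_eq_iff)
    next
      case False
      then show ?thesis using off i j by auto
    qed
  qed (use U A in auto)
  have "U * Dg n d * cadj U = U * (cadj U * A * U) * cadj U" using B by simp
  also have "\<dots> = (U * cadj U) * A * (U * cadj U)"
  proof -
    have c1: "cadj U * A \<in> carrier_mat n n" using U A by auto
    have "U * (cadj U * A * U) = U * (cadj U * A) * U"
      using assoc_mult_mat[of U n n "cadj U * A" n U n] U c1 by simp
    also have "U * (cadj U * A) = U * cadj U * A"
      using assoc_mult_mat[of U n n "cadj U" n A n] U A by simp
    finally have e1: "U * (cadj U * A * U) = U * cadj U * A * U" .
    have c2: "U * cadj U * A \<in> carrier_mat n n" using U A by auto
    show ?thesis unfolding e1 using assoc_mult_mat[of "U * cadj U * A" n n U n "cadj U" n] U c2 by simp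
  qed
  also have "\<dots> = A" using UU' A by simp
  finally show ?thesis using U UU UU' B by metis
qed

lemma psd_diag:
  assumes S: "psd_mat n S" and V: "V \<in> carrier_mat n n" and k: "k < n"
  shows "Re ((cadj V * S * V) $$ (k,k)) \<ge> 0"
proof -
  have Sc: "S \<in> carrier_mat n n" using S unfolding psd_mat_def by auto
  define v where "v = col V k"
  have v: "v \<in> carrier_vec n" using V unfolding v_def by auto
  have "0 \<le> Re (conjugate v \<bullet> (S *\<^sub>v v))" using S v unfolding psd_mat_def by auto
  also have "conjugate v \<bullet> (S *\<^sub>v v) = (\<Sum>i<n. cnj (V $$ (i,k)) * (\<Sum>j<n. S $$ (i,j) * V $$ (j,k)))"
    using V Sc k by (auto simp: v_def scalar_prod_def lessThan_atLeast0 intro!: sum.cong)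
  also have "\<dots> = (\<Sum>j<n. (\<Sum>i<n. cnj (V $$ (i,k)) * S $$ (i,j)) * V $$ (j,k))"
    by (simp add: sum_distrib_left sum_distrib_right mult.assoc) (rule sum.swap)
  also have "\<dots> = (cadj V * S * V) $$ (k,k)"
  proof -
    have c1: "cadj V * S \<in> carrier_mat n n" using V Sc by auto
    have inner: "(cadj V * S) $$ (k,j) = (\<Sum>i<n. cnj (V $$ (i,k)) * S $$ (i,j))" if j: "j < n" for j
      by (subst mult_entry[OF cadj_carrier[OF V] Sc k j]) (use V k j in \<open>auto intro!: sum.cong\<close>)
    show ?thesis
      by (subst mult_entry[OF c1 V k k]) (use inner in \<open>auto intro!: sum.cong\<close>)
  qed
  finally show ?thesis .
qed



lemma unit_cancel1:
  assumes "V \<in> carrier_mat n n" "cadj V * V = 1\<^sub>m n" "X \<in> carrier_mat n m"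
  shows "cadj V * (V * X) = X"
  using assms assoc_mult_mat[of "cadj V" n n V n X m] by simp

lemma unit_cancel2:
  assumes "V \<in> carrier_mat n n" "V * cadj V = 1\<^sub>m n" "X \<in> carrier_mat n m"
  shows "V * (cadj V * X) = X"
  using assms assoc_mult_mat[of V n n "cadj V" n X m] by simp

lemma psd_spectral:
  assumes S: "psd_mat n S"
  shows "\<exists>V s. V \<in> carrier_mat n n \<and> cadj V * V = 1\<^sub>m n \<and> V * cadj V = 1\<^sub>m n \<and>
     S = V * Dg n s * cadj V \<and> (\<forall>k<n. s k \<ge> 0)"
proof -
  have Sc: "S \<in> carrier_mat n n" and hS: "cadj S = S" using S unfolding psd_mat_def by auto
  obtain V s where V: "V \<in> carrier_mat n n" "cadj V * V = 1\<^sub>m n" "V * cadj V = 1\<^sub>m n"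
    "cadj V * S * V = Dg n s" "S = V * Dg n s * cadj V"
    using spectral2[OF Sc hS] by blast
  have "s k \<ge> 0" if k: "k < n" for k
    using psd_diag[OF S V(1) k] V(4) k by simp
  thus ?thesis using V by blast
qed

lemma Dg_form_mult:
  assumes V: "V \<in> carrier_mat n n" "cadj V * V = 1\<^sub>m n"
  shows "(V * Dg n a * cadj V) * (V * Dg n b * cadj V) = V * Dg n (\<lambda>k. a k * b k) * cadj V"
proof -
  have "(V * Dg n a * cadj V) * (V * Dg n b * cadj V) = V * (Dg n a * (cadj V * (V * (Dg n b * cadj V))))"
    using V by (simp add: assoc_mult_mat[of _ n n _ n _ n] mult_carrier_sq[of _ n])
  also have "cadj V * (V * (Dg n b * cadj V)) = Dg n b * cadj V"
    using unit_cancel1[OF V, of "Dg n b * cadj V" n] V by (simp add: mult_carrier_sq[of _ n])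
  finally show ?thesis
    using V by (simp add: assoc_mult_mat[of _ n n _ n _ n] mult_carrier_sq[of _ n] Dg_mult[symmetric])
qed

lemma DgM_entry:
  assumes M: "M \<in> carrier_mat n n" and i: "i < n" and j: "j < n"
  shows "(Dg n c * M) $$ (i,j) = complex_of_real (c i) * M $$ (i,j)"
proof -
  have "(Dg n c * M) $$ (i,j) = (\<Sum>l<n. Dg n c $$ (i,l) * M $$ (l,j))"
    by (rule mult_entry[OF Dg_carrier M i j])
  also have "\<dots> = (\<Sum>l<n. if l = i then complex_of_real (c i) * M $$ (i,j) else 0)"
    by (rule sum.cong) (use i in auto)
  also have "\<dots> = complex_of_real (c i) * M $$ (i,j)" using i by (subst sum.delta) auto
  finally show ?thesis .
qed

lemma sqrt_unique:
  assumes S: "psd_mat n S" and T: "psd_mat n T" and ST: "S * S = T * T"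
  shows "S = T"
proof -
  obtain V s where V: "V \<in> carrier_mat n n" "cadj V * V = 1\<^sub>m n" "V * cadj V = 1\<^sub>m n"
    and Sf: "S = V * Dg n s * cadj V" and s0: "\<forall>k<n. s k \<ge> 0"
    using psd_spectral[OF S] by blast
  obtain W t where W: "W \<in> carrier_mat n n" "cadj W * W = 1\<^sub>m n" "W * cadj W = 1\<^sub>m n"
    and Tf: "T = W * Dg n t * cadj W" and t0: "\<forall>k<n. t k \<ge> 0"
    using psd_spectral[OF T] by blast
  define G where "G = cadj V * W"
  have G: "G \<in> carrier_mat n n" unfolding G_def using V W by auto
  have "V * Dg n (\<lambda>k. s k * s k) * cadj V = W * Dg n (\<lambda>k. t k * t k) * cadj W"
    using ST unfolding Sf Tf Dg_form_mult[OF V(1,2)] Dg_form_mult[OF W(1,2)] .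
  hence "cadj V * (V * Dg n (\<lambda>k. s k * s k) * cadj V) * W = cadj V * (W * Dg n (\<lambda>k. t k * t k) * cadj W) * W"
    by simp
  moreover have "cadj V * (V * Dg n (\<lambda>k. s k * s k) * cadj V) * W = Dg n (\<lambda>k. s k * s k) * G"
  proof -
    have "cadj V * (V * Dg n (\<lambda>k. s k * s k) * cadj V) * W = cadj V * (V * (Dg n (\<lambda>k. s k * s k) * (cadj V * W)))"
      using V W by (simp add: assoc_mult_mat[of _ n n _ n _ n] mult_carrier_sq[of _ n])
    also have "\<dots> = Dg n (\<lambda>k. s k * s k) * G"
      unfolding G_def using unit_cancel1[OF V(1,2), of "Dg n (\<lambda>k. s k * s k) * (cadj V * W)" n] V W by (simp add: mult_carrier_sq[of _ n])
    finally show ?thesis .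
  qed
  moreover have "cadj V * (W * Dg n (\<lambda>k. t k * t k) * cadj W) * W = G * Dg n (\<lambda>k. t k * t k)"
  proof -
    have "cadj V * (W * Dg n (\<lambda>k. t k * t k) * cadj W) * W = cadj V * (W * (Dg n (\<lambda>k. t k * t k) * (cadj W * W)))"
      using V W by (simp add: assoc_mult_mat[of _ n n _ n _ n] mult_carrier_sq[of _ n])
    also have "\<dots> = G * Dg n (\<lambda>k. t k * t k)"
      unfolding G_def using V W by (simp add: assoc_mult_mat[of _ n n _ n _ n] mult_carrier_sq[of _ n])
    finally show ?thesis .
  qed
  ultimately have eq2: "Dg n (\<lambda>k. s k * s k) * G = G * Dg n (\<lambda>k. t k * t k)" by simp
  have eq1: "Dg n s * G = G * Dg n t"
  proof (rule eq_matI)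
    fix i j assume "i < dim_row (G * Dg n t)" "j < dim_col (G * Dg n t)"
    hence i: "i < n" and j: "j < n" using G by auto
    have e: "complex_of_real (s i * s i) * G $$ (i,j) = G $$ (i,j) * complex_of_real (t j * t j)"
      using arg_cong[OF eq2, of "\<lambda>M. M $$ (i,j)"] DgM_entry[OF G i j] VDg_entry[OF G i j] by simp
    have "complex_of_real (s i) * G $$ (i,j) = G $$ (i,j) * complex_of_real (t j)"
    proof (cases "G $$ (i,j) = 0")
      case False
      hence "complex_of_real (s i * s i) = complex_of_real (t j * t j)" using e by (simp add: mult.commute)
      hence "s i * s i = t j * t j" using of_real_eq_iff by blast
      hence "s i = t j" using s0 t0 i j by (metis power2_eq_iff_nonneg power2_eq_square)
      thus ?thesis by (simp add: mult.commute)
    qed simp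
    thus "(Dg n s * G) $$ (i,j) = (G * Dg n t) $$ (i,j)"
      using DgM_entry[OF G i j] VDg_entry[OF G i j] by simp
  qed (use G in auto)
  have "S = V * (Dg n s * (G * cadj W))"
  proof -
    have "G * cadj W = cadj V" unfolding G_def
      using V W assoc_mult_mat[of "cadj V" n n W n "cadj W" n] by simp
    thus ?thesis unfolding Sf using V by (simp add: assoc_mult_mat[of _ n n _ n _ n] mult_carrier_sq[of _ n])
  qed
  also have "\<dots> = V * ((Dg n s * G) * cadj W)"
    using V W G assoc_mult_mat[of "Dg n s" n n G n "cadj W" n] by simp
  also have "\<dots> = V * (cadj V * (W * (Dg n t * cadj W)))"
    unfolding eq1 unfolding G_def using V W by (simp add: assoc_mult_mat[of _ n n _ n _ n] mult_carrier_sq[of _ n])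
  also have "\<dots> = T"
    unfolding Tf using unit_cancel2[OF V(1,3), of "W * (Dg n t * cadj W)" n] V W
    by (simp add: assoc_mult_mat[of _ n n _ n _ n] mult_carrier_sq[of _ n])
  finally show ?thesis .
qed


lemma Dg_cong: "(\<And>k. k < n \<Longrightarrow> a k = b k) \<Longrightarrow> Dg n a = Dg n b"
  by (rule eq_matI) auto

lemma cadj_form:
  assumes V: "V \<in> carrier_mat n n"
  shows "cadj (V * Dg n c * cadj V) = V * Dg n c * cadj V"
proof -
  have c1: "V * Dg n c \<in> carrier_mat n n" using V by auto
  have "cadj (V * Dg n c * cadj V) = V * cadj (V * Dg n c)"
    using cadj_mult[OF c1 cadj_carrier[OF V]] by simp
  also have "cadj (V * Dg n c) = Dg n c * cadj V" using cadj_mult[OF V Dg_carrier] by simp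
  finally show ?thesis using V assoc_mult_mat[of V n n "Dg n c" n "cadj V" n] by simp
qed

lemma psd_form:
  assumes V: "V \<in> carrier_mat n n" and c0: "\<And>k. k < n \<Longrightarrow> c k \<ge> 0"
  shows "psd_mat n (V * Dg n c * cadj V)"
  unfolding psd_mat_def
proof (intro conjI ballI)
  let ?S = "V * Dg n c * cadj V"
  show Sc: "?S \<in> carrier_mat n n" using V by auto
  show "cadj ?S = ?S" using cadj_form[OF V] .
  fix v :: "complex vec" assume v: "v \<in> carrier_vec n"
  define w where "w k = (\<Sum>j<n. cnj (V $$ (j,k)) * v $ j)" for k
  have "conjugate v \<bullet> (?S *\<^sub>v v) = (\<Sum>i<n. cnj (v $ i) * (\<Sum>j<n. ?S $$ (i,j) * v $ j))"
    using v Sc by (auto simp: scalar_prod_def lessThan_atLeast0 intro!: sum.cong)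
  also have "\<dots> = (\<Sum>i<n. \<Sum>j<n. \<Sum>k<n. cnj (v $ i) * V $$ (i,k) * complex_of_real (c k) * cnj (V $$ (j,k)) * v $ j)"
    by (rule sum.cong[OF refl]) (simp add: VDgV_entry[OF V] sum_distrib_left sum_distrib_right mult.assoc)
  also have "\<dots> = (\<Sum>k<n. \<Sum>i<n. \<Sum>j<n. cnj (v $ i) * V $$ (i,k) * complex_of_real (c k) * cnj (V $$ (j,k)) * v $ j)"
    by (subst sum.swap) (subst (2) sum.swap, rule refl)
  also have "\<dots> = (\<Sum>k<n. complex_of_real (c k) * (cnj (w k) * w k))"
    unfolding w_def by (rule sum.cong[OF refl]) (simp add: sum_distrib_left sum_distrib_right mult_ac sum_product)
  finally have eq: "conjugate v \<bullet> (?S *\<^sub>v v) = (\<Sum>k<n. complex_of_real (c k) * (cnj (w k) * w k))" .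
  have "Re (\<Sum>k<n. complex_of_real (c k) * (cnj (w k) * w k)) = (\<Sum>k<n. c k * (cmod (w k))\<^sup>2)"
  proof -
    have "cnj (w k) * w k = complex_of_real ((cmod (w k))\<^sup>2)" for k
      using complex_norm_square by (metis mult.commute)
    thus ?thesis by (simp add: Re_sum)
  qed
  also have "\<dots> \<ge> 0" using c0 by (intro sum_nonneg) auto
  finally show "0 \<le> Re (conjugate v \<bullet> (?S *\<^sub>v v))" using eq by simp
qed

lemma sqrt_exists:
  fixes X :: "complex mat"
  assumes X: "X \<in> carrier_mat n n"
  shows "\<exists>S. psd_mat n S \<and> S * S = cadj X * X"
proof -
  let ?A = "cadj X * X"
  have A: "?A \<in> carrier_mat n n" using X by auto
  have hA: "cadj ?A = ?A" using cadj_mult[OF cadj_carrier[OF X] X] by simp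
  obtain V d where V: "V \<in> carrier_mat n n" "cadj V * V = 1\<^sub>m n" "V * cadj V = 1\<^sub>m n"
    and VA: "cadj V * ?A * V = Dg n d" and Af: "?A = V * Dg n d * cadj V"
    using spectral2[OF A hA] by blast
  have d0: "d k \<ge> 0" if k: "k < n" for k
  proof -
    define Y where "Y = X * V"
    have Y: "Y \<in> carrier_mat n n" unfolding Y_def using X V by auto
    have "cadj V * ?A * V = cadj Y * Y"
      unfolding Y_def cadj_mult[OF X V(1)] using X V
      by (simp add: assoc_mult_mat[of _ n n _ n _ n] mult_carrier_sq[of _ n])
    hence "complex_of_real (d k) = (cadj Y * Y) $$ (k,k)" using VA k by (metis Dg_index)
    also have "\<dots> = (\<Sum>m<n. cnj (Y $$ (m,k)) * Y $$ (m,k))"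
      by (subst mult_entry[OF cadj_carrier[OF Y] Y k k]) (use Y k in \<open>auto intro!: sum.cong\<close>)
    also have "\<dots> = complex_of_real (\<Sum>m<n. (cmod (Y $$ (m,k)))\<^sup>2)"
    proof -
      have "cnj z * z = complex_of_real ((cmod z)\<^sup>2)" for z
        using complex_norm_square by (metis mult.commute)
      thus ?thesis by simp
    qed
    finally have "d k = (\<Sum>m<n. (cmod (Y $$ (m,k)))\<^sup>2)" using of_real_eq_iff by blast
    thus ?thesis by (simp add: sum_nonneg)
  qed
  define S where "S = V * Dg n (\<lambda>k. sqrt (d k)) * cadj V"
  have "psd_mat n S" unfolding S_def by (rule psd_form[OF V(1)]) (use d0 in auto)
  moreover have "S * S = ?A"
  proof -
    have "S * S = V * Dg n (\<lambda>k. sqrt (d k) * sqrt (d k)) * cadj V"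
      unfolding S_def by (rule Dg_form_mult[OF V(1,2)])
    also have "Dg n (\<lambda>k. sqrt (d k) * sqrt (d k)) = Dg n d"
      by (rule Dg_cong) (use d0 in auto)
    finally show ?thesis using Af by simp
  qed
  ultimately show ?thesis by blast
qed

lemma msqrt_props:
  fixes X :: "complex mat"
  assumes X: "X \<in> carrier_mat n n"
  shows "psd_mat n (msqrt (cadj X * X)) \<and> msqrt (cadj X * X) * msqrt (cadj X * X) = cadj X * X"
proof -
  have dr: "dim_row (cadj X * X) = n" using X by simp
  have "\<exists>!S. psd_mat n S \<and> S * S = cadj X * X"
    using sqrt_exists[OF X] sqrt_unique by metis
  from theI'[OF this] show ?thesis unfolding msqrt_def dr .
qed



lemma cnj_mult_self: "cnj z * z = complex_of_real ((cmod z)\<^sup>2)"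
  using complex_norm_square by (metis mult.commute)

lemma mult_cnj_self: "z * cnj z = complex_of_real ((cmod z)\<^sup>2)"
  using complex_norm_square by metis

lemma key_orth:
  fixes Y :: "nat \<Rightarrow> nat \<Rightarrow> complex" and N :: nat
  assumes orth: "\<And>a b. a < N \<Longrightarrow> b < N \<Longrightarrow> a \<noteq> b \<Longrightarrow> (\<Sum>m<N. cnj (Y m a) * Y m b) = 0"
  defines "r \<equiv> \<lambda>k. sqrt (\<Sum>m<N. (cmod (Y m k))\<^sup>2)"
  defines "u \<equiv> \<lambda>m k. if r k = 0 then 0 else Y m k / complex_of_real (r k)"
  assumes a: "a < N" and b: "b < N"
  shows "(\<Sum>m<N. cnj (u m a) * u m b) = (if a = b \<and> r a \<noteq> 0 then 1 else 0)"
proof (cases "r a = 0 \<or> r b = 0")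
  case True
  then show ?thesis unfolding u_def by auto
next
  case False
  hence ra: "r a \<noteq> 0" and rb: "r b \<noteq> 0" by auto
  have "(\<Sum>m<N. cnj (u m a) * u m b) = (\<Sum>m<N. cnj (Y m a) * Y m b) / (complex_of_real (r a) * complex_of_real (r b))"
    unfolding u_def using ra rb by (simp add: sum_divide_distrib)
  also have "\<dots> = (if a = b \<and> r a \<noteq> 0 then 1 else 0)"
  proof (cases "a = b")
    case True
    have s: "(\<Sum>m<N. cnj (Y m a) * Y m a) = complex_of_real (\<Sum>m<N. (cmod (Y m a))\<^sup>2)"
      by (simp add: cnj_mult_self)
    have "(\<Sum>m<N. (cmod (Y m a))\<^sup>2) = r a * r a"
      unfolding r_def by (simp add: sum_nonneg)
    hence "complex_of_real (\<Sum>m<N. (cmod (Y m a))\<^sup>2) = complex_of_real (r a) * complex_of_real (r a)"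
      by simp
    then show ?thesis using True s ra by simp
  next
    case False
    then show ?thesis using orth[OF a b] by simp
  qed
  finally show ?thesis .
qed

lemma key_bessel:
  fixes u :: "nat \<Rightarrow> nat \<Rightarrow> complex" and N :: nat and p :: "nat \<Rightarrow> bool"
  assumes on: "\<And>a b. a < N \<Longrightarrow> b < N \<Longrightarrow> (\<Sum>m<N. cnj (u m a) * u m b) = (if a = b \<and> p a then 1 else 0)"
  and z: "\<And>m k. \<not> p k \<Longrightarrow> u m k = 0"
  and m: "m < N"
  shows "(\<Sum>k<N. (cmod (u m k))\<^sup>2) \<le> 1"
proof -
  define P where "P = (\<Sum>k<N. (cmod (u m k))\<^sup>2)"
  define Q where "Q l = (\<Sum>k<N. u m k * cnj (u l k))" for l
  have P0: "P \<ge> 0" unfolding P_def by (simp add: sum_nonneg)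
  have Qm: "Q m = complex_of_real P"
    unfolding Q_def P_def by (simp add: mult_cnj_self)
  have "(\<Sum>l<N. Q l * cnj (Q l)) = (\<Sum>l<N. \<Sum>k<N. \<Sum>j<N. u m k * cnj (u m j) * (cnj (u l k) * u l j))"
    unfolding Q_def by (simp add: sum_distrib_left sum_distrib_right sum_product mult_ac)
  also have "\<dots> = (\<Sum>k<N. \<Sum>j<N. \<Sum>l<N. u m k * cnj (u m j) * (cnj (u l k) * u l j))"
    by (subst sum.swap) (subst (2) sum.swap, rule refl)
  also have "\<dots> = (\<Sum>k<N. \<Sum>j<N. u m k * cnj (u m j) * (if k = j \<and> p k then 1 else 0))"
    by (intro sum.cong refl) (simp add: sum_distrib_left[symmetric] on)
  also have "\<dots> = (\<Sum>k<N. u m k * cnj (u m k))"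
  proof (rule sum.cong[OF refl])
    fix k assume k: "k \<in> {..<N}"
    have "(\<Sum>j<N. u m k * cnj (u m j) * (if k = j \<and> p k then 1 else 0)) =
          (\<Sum>j<N. if j = k then (if p k then u m k * cnj (u m k) else 0) else 0)"
      by (rule sum.cong) auto
    also have "\<dots> = u m k * cnj (u m k)" using k z by (subst sum.delta) auto
    finally show "(\<Sum>j<N. u m k * cnj (u m j) * (if k = j \<and> p k then 1 else 0)) = u m k * cnj (u m k)" .
  qed
  also have "\<dots> = complex_of_real P" unfolding P_def by (simp add: mult_cnj_self)
  finally have QQ: "(\<Sum>l<N. Q l * cnj (Q l)) = complex_of_real P" .
  have "(\<Sum>l<N. (cmod (Q l))\<^sup>2) = P"
  proof -
    have "complex_of_real (\<Sum>l<N. (cmod (Q l))\<^sup>2) = (\<Sum>l<N. Q l * cnj (Q l))"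
      by (simp add: mult_cnj_self)
    thus ?thesis using QQ of_real_eq_iff by metis
  qed
  moreover have "(cmod (Q m))\<^sup>2 \<le> (\<Sum>l<N. (cmod (Q l))\<^sup>2)"
    using m by (intro member_le_sum) auto
  moreover have "cmod (Q m) = P" using Qm P0 by simp
  ultimately have "P * P \<le> P" by (simp add: power2_eq_square)
  hence "P \<le> 1" using P0 mult_le_cancel_left2[of P P] by (cases "P = 0") auto
  thus ?thesis unfolding P_def .
qed


lemma key:
  fixes X V Y :: "nat \<Rightarrow> nat \<Rightarrow> complex" and N :: nat
  assumes rows: "\<And>j. j < N \<Longrightarrow> (\<Sum>k<N. (cmod (V j k))\<^sup>2) = 1"
  and orth: "\<And>a b. a < N \<Longrightarrow> b < N \<Longrightarrow> a \<noteq> b \<Longrightarrow> (\<Sum>m<N. cnj (Y m a) * Y m b) = 0"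
  and Ydef: "\<And>m k. Y m k = (\<Sum>j<N. X m j * V j k)"
  shows "(\<Sum>k<N. sqrt (\<Sum>m<N. (cmod (Y m k))\<^sup>2)) \<le> (\<Sum>m<N. \<Sum>j<N. cmod (X m j))"
proof -
  define r where "r = (\<lambda>k. sqrt (\<Sum>m<N. (cmod (Y m k))\<^sup>2))"
  define u where "u = (\<lambda>m k. if r k = 0 then 0 else Y m k / complex_of_real (r k))"
  have on: "(\<Sum>m<N. cnj (u m a) * u m b) = (if a = b \<and> r a \<noteq> 0 then 1 else 0)" if "a < N" "b < N" for a b
    using key_orth[of N Y a b, OF orth] that unfolding u_def r_def by blast
  have P1: "(\<Sum>k<N. (cmod (u m k))\<^sup>2) \<le> 1" if m: "m < N" for m
    by (rule key_bessel[of N u "\<lambda>k. r k \<noteq> 0", OF on _ m]) (auto simp: u_def)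
  have rk: "complex_of_real (r k) = (\<Sum>m<N. cnj (u m k) * Y m k)" for k
  proof (cases "r k = 0")
    case True thus ?thesis by (simp add: u_def)
  next
    case False
    have "(\<Sum>m<N. cnj (u m k) * Y m k) = (\<Sum>m<N. cnj (Y m k) * Y m k) / complex_of_real (r k)"
      using False by (simp add: u_def sum_divide_distrib)
    also have "(\<Sum>m<N. cnj (Y m k) * Y m k) = complex_of_real (r k * r k)"
      unfolding r_def by (simp add: cnj_mult_self sum_nonneg)
    finally show ?thesis using False by simp
  qed
  define c where "c m j = (\<Sum>k<N. cnj (u m k) * V j k)" for m j
  have "complex_of_real (\<Sum>k<N. r k) = (\<Sum>k<N. \<Sum>m<N. \<Sum>j<N. cnj (u m k) * (X m j * V j k))"
    by (simp add: rk Ydef sum_distrib_left)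
  also have "\<dots> = (\<Sum>m<N. \<Sum>j<N. \<Sum>k<N. cnj (u m k) * (X m j * V j k))"
    by (subst sum.swap) (subst (2) sum.swap, rule refl)
  also have "\<dots> = (\<Sum>m<N. \<Sum>j<N. X m j * c m j)"
    unfolding c_def by (simp add: sum_distrib_left mult_ac)
  finally have eq: "(\<Sum>k<N. r k) = Re (\<Sum>m<N. \<Sum>j<N. X m j * c m j)"
    by (metis Re_complex_of_real)
  have cb: "cmod (c m j) \<le> 1" if m: "m < N" and j: "j < N" for m j
  proof -
    have "cmod (c m j) \<le> (\<Sum>k<N. cmod (u m k) * cmod (V j k))"
      unfolding c_def by (rule order_trans[OF norm_sum]) (simp add: norm_mult)
    also have "\<dots> \<le> (\<Sum>k<N. ((cmod (u m k))\<^sup>2 + (cmod (V j k))\<^sup>2) / 2)"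
    proof (rule sum_mono)
      fix k
      have "0 \<le> (cmod (u m k) - cmod (V j k))\<^sup>2" by simp
      thus "cmod (u m k) * cmod (V j k) \<le> ((cmod (u m k))\<^sup>2 + (cmod (V j k))\<^sup>2) / 2"
        by (simp add: power2_diff)
    qed
    also have "\<dots> = ((\<Sum>k<N. (cmod (u m k))\<^sup>2) + (\<Sum>k<N. (cmod (V j k))\<^sup>2)) / 2"
      by (simp only: sum.distrib[symmetric] sum_divide_distrib[symmetric])
    also have "\<dots> \<le> 1" using P1[OF m] rows[OF j] by simp
    finally show ?thesis .
  qed
  have "Re (\<Sum>m<N. \<Sum>j<N. X m j * c m j) \<le> cmod (\<Sum>m<N. \<Sum>j<N. X m j * c m j)"
    by (rule complex_Re_le_cmod)
  also have "\<dots> \<le> (\<Sum>m<N. \<Sum>j<N. cmod (X m j * c m j))"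
    by (rule order_trans[OF norm_sum]) (intro sum_mono norm_sum)
  also have "\<dots> \<le> (\<Sum>m<N. \<Sum>j<N. cmod (X m j))"
  proof (intro sum_mono)
    fix m j assume "m \<in> {..<N}" "j \<in> {..<N}"
    thus "cmod (X m j * c m j) \<le> cmod (X m j)"
      using cb[of m j] by (simp add: norm_mult mult_left_le)
  qed
  finally show ?thesis using eq unfolding r_def by simp
qed



lemma trace_norm_bound:
  fixes X :: "complex mat"
  assumes X: "X \<in> carrier_mat n n"
  shows "trace_norm X \<le> (\<Sum>m<n. \<Sum>j<n. cmod (X $$ (m,j)))"
proof -
  define S where "S = msqrt (cadj X * X)"
  have S: "psd_mat n S" and SS: "S * S = cadj X * X" using msqrt_props[OF X] unfolding S_def by auto
  obtain V s where V: "V \<in> carrier_mat n n" "cadj V * V = 1\<^sub>m n" "V * cadj V = 1\<^sub>m n"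
    and Sf: "S = V * Dg n s * cadj V" and s0: "\<forall>k<n. s k \<ge> 0"
    using psd_spectral[OF S] by blast
  have Sc: "S \<in> carrier_mat n n" using S unfolding psd_mat_def by auto
  have colV: "(\<Sum>i<n. cnj (V $$ (i,k)) * V $$ (i,k)) = 1" if k: "k < n" for k
  proof -
    have "(cadj V * V) $$ (k,k) = 1" using V(2) k by simp
    moreover have "(cadj V * V) $$ (k,k) = (\<Sum>i<n. cnj (V $$ (i,k)) * V $$ (i,k))"
      by (subst mult_entry[OF cadj_carrier[OF V(1)] V(1) k k]) (use V k in \<open>auto intro!: sum.cong\<close>)
    ultimately show ?thesis by simp
  qed
  have rowV: "(\<Sum>k<n. (cmod (V $$ (j,k)))\<^sup>2) = 1" if j: "j < n" for j
  proof -
    have "(V * cadj V) $$ (j,j) = 1" using V(3) j by simp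
    moreover have "(V * cadj V) $$ (j,j) = (\<Sum>k<n. V $$ (j,k) * cnj (V $$ (j,k)))"
      by (subst mult_entry[OF V(1) cadj_carrier[OF V(1)] j j]) (use V j in \<open>auto intro!: sum.cong\<close>)
    ultimately have "complex_of_real (\<Sum>k<n. (cmod (V $$ (j,k)))\<^sup>2) = 1"
      by (simp add: mult_cnj_self)
    thus ?thesis by (metis of_real_eq_1_iff)
  qed
  have tr: "ctrace S = complex_of_real (\<Sum>k<n. s k)"
  proof -
    have "ctrace S = (\<Sum>i<n. \<Sum>k<n. V $$ (i,k) * complex_of_real (s k) * cnj (V $$ (i,k)))"
      unfolding ctrace_def using Sc Sf VDgV_entry[OF V(1)] by (auto intro!: sum.cong simp del: index_mult_mat)
    also have "\<dots> = (\<Sum>k<n. complex_of_real (s k) * (\<Sum>i<n. cnj (V $$ (i,k)) * V $$ (i,k)))"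
      by (subst sum.swap) (simp add: sum_distrib_left mult_ac)
    also have "\<dots> = (\<Sum>k<n. complex_of_real (s k))" using colV by simp
    finally show ?thesis by simp
  qed
  define Y where "Y = X * V"
  have Y: "Y \<in> carrier_mat n n" unfolding Y_def using X V by auto
  have YY: "cadj Y * Y = Dg n (\<lambda>k. s k * s k)"
  proof -
    have "cadj Y * Y = cadj V * (cadj X * X) * V"
      unfolding Y_def cadj_mult[OF X V(1)] using X V
      by (simp add: assoc_mult_mat[of _ n n _ n _ n] mult_carrier_sq[of _ n])
    also have "cadj X * X = V * Dg n (\<lambda>k. s k * s k) * cadj V"
      using SS Dg_form_mult[OF V(1,2), of s s] unfolding Sf by simp
    also have "cadj V * (V * Dg n (\<lambda>k. s k * s k) * cadj V) * V = Dg n (\<lambda>k. s k * s k)"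
      using V unit_cancel1[OF V(1,2), of "Dg n (\<lambda>k. s k * s k)" n]
      by (simp add: assoc_mult_mat[of _ n n _ n _ n] mult_carrier_sq[of _ n])
    finally show ?thesis .
  qed
  have YYe: "(\<Sum>m<n. cnj (Y $$ (m,a)) * Y $$ (m,b)) = (cadj Y * Y) $$ (a,b)" if "a < n" "b < n" for a b
    by (subst mult_entry[OF cadj_carrier[OF Y] Y that]) (use Y that in \<open>auto intro!: sum.cong\<close>)
  define Yf where "Yf m k = (\<Sum>j<n. X $$ (m,j) * V $$ (j,k))" for m k
  have Yf: "Yf m k = Y $$ (m,k)" if "m < n" "k < n" for m k
    unfolding Yf_def Y_def using mult_entry[OF X V(1) that] by simp
  have sk: "s k = sqrt (\<Sum>m<n. (cmod (Yf m k))\<^sup>2)" if k: "k < n" for k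
  proof -
    have "complex_of_real (s k * s k) = (\<Sum>m<n. cnj (Y $$ (m,k)) * Y $$ (m,k))"
      using YYe[OF k k] YY k by simp
    also have "\<dots> = complex_of_real (\<Sum>m<n. (cmod (Yf m k))\<^sup>2)"
      using Yf k by (simp add: cnj_mult_self)
    finally have ss: "s k * s k = (\<Sum>m<n. (cmod (Yf m k))\<^sup>2)" using of_real_eq_iff by blast
    have "sqrt (s k * s k) = s k" using s0 k by simp
    thus ?thesis unfolding ss by simp
  qed
  have orth: "(\<Sum>m<n. cnj (Yf m a) * Yf m b) = 0" if "a < n" "b < n" "a \<noteq> b" for a b
    using YYe[of a b] YY that Yf by simp
  have "trace_norm X = (\<Sum>k<n. s k)" unfolding trace_norm_def S_def[symmetric] tr by simp
  also have "\<dots> = (\<Sum>k<n. sqrt (\<Sum>m<n. (cmod (Yf m k))\<^sup>2))" using sk by simp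
  also have "\<dots> \<le> (\<Sum>m<n. \<Sum>j<n. cmod (X $$ (m,j)))"
    by (rule key[of n "\<lambda>j k. V $$ (j,k)" Yf "\<lambda>m j. X $$ (m,j)"]) (use rowV orth in \<open>auto simp: Yf_def\<close>)
  finally show ?thesis .
qed



lemma sum_blocks:
  fixes f :: "nat \<Rightarrow> real" and a b :: nat
  shows "(\<Sum>k<a*b. f k) = (\<Sum>i<a. \<Sum>m<b. f (i*b + m))"
proof -
  have "(\<Sum>k<a*b. f k) = (\<Sum>i<a. sum f {i*b..<i*b+b})"
    using sum.nat_group[of f b a] by simp
  also have "\<dots> = (\<Sum>i<a. \<Sum>m<b. f (i*b + m))"
  proof (rule sum.cong[OF refl])
    fix i
    have "sum f {0 + i*b..<b + i*b} = sum (\<lambda>m. f (m + i*b)) {0..<b}"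
      by (rule sum.shift_bounds_nat_ivl)
    thus "sum f {i*b..<i*b+b} = (\<Sum>m<b. f (i*b + m))"
      by (simp add: add.commute lessThan_atLeast0)
  qed
  finally show ?thesis .
qed

lemma idx_eq:
  fixes dB :: nat
  assumes "m < dB" "n < dB"
  shows "(i*dB + m = j*dB + n) \<longleftrightarrow> (i = j \<and> m = n)"
proof
  assume h: "i*dB + m = j*dB + n"
  have "(i*dB + m) div dB = i" "(i*dB + m) mod dB = m" using assms by auto
  moreover have "(j*dB + n) div dB = j" "(j*dB + n) mod dB = n" using assms by auto
  ultimately show "i = j \<and> m = n" using h by metis
qed auto

theorem proposition5:
  fixes dA dB :: nat and \<rho> :: "complex mat"
  assumes "dA \<ge> 1" and "dB \<ge> 1"
    and "density_mat (dA * dB) \<rho>"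
  shows "C_l1 \<rho> \<ge> C_l1_IQ dA dB \<rho> + C_l1 (ptrace_A dA dB \<rho>)"
proof -
  have rc: "\<rho> \<in> carrier_mat (dA*dB) (dA*dB)" using assms(3) unfolding density_mat_def psd_mat_def by auto
  define a where "a i m j n = cmod (\<rho> $$ (i*dB + m, j*dB + n))" for i m j n
  define F where "F i j = (\<Sum>m<dB. \<Sum>n<dB. if i \<noteq> j \<or> m \<noteq> n then a i m j n else 0)" for i j
  have C: "C_l1 \<rho> = (\<Sum>i<dA. \<Sum>j<dA. F i j)"
  proof -
    have "C_l1 \<rho> = (\<Sum>k<dA*dB. \<Sum>l<dA*dB. if k \<noteq> l then cmod (\<rho> $$ (k, l)) else 0)"
      unfolding C_l1_def using rc by simp
    also have "\<dots> = (\<Sum>i<dA. \<Sum>m<dB. \<Sum>j<dA. \<Sum>n<dB. if i*dB+m \<noteq> j*dB+n then cmod (\<rho> $$ (i*dB+m, j*dB+n)) else 0)"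
      by (simp add: sum_blocks)
    also have "\<dots> = (\<Sum>i<dA. \<Sum>m<dB. \<Sum>j<dA. \<Sum>n<dB. if i \<noteq> j \<or> m \<noteq> n then a i m j n else 0)"
      by (intro sum.cong refl) (auto simp: idx_eq a_def)
    also have "\<dots> = (\<Sum>i<dA. \<Sum>j<dA. F i j)"
      unfolding F_def by (rule sum.cong[OF refl]) (rule sum.swap)
    finally show ?thesis .
  qed
  have split: "(\<Sum>i<dA. \<Sum>j<dA. F i j) = (\<Sum>i<dA. \<Sum>j<dA. if i \<noteq> j then F i j else 0) + (\<Sum>i<dA. F i i)"
  proof -
    have "(\<Sum>i<dA. \<Sum>j<dA. F i j) = (\<Sum>i<dA. (\<Sum>j<dA. if i \<noteq> j then F i j else 0) + (\<Sum>j<dA. if j = i then F i i else 0))"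
    proof (rule sum.cong[OF refl])
      fix i
      have "(\<Sum>j<dA. F i j) = (\<Sum>j<dA. (if i \<noteq> j then F i j else 0) + (if j = i then F i i else 0))"
        by (rule sum.cong) auto
      thus "(\<Sum>j<dA. F i j) = (\<Sum>j<dA. if i \<noteq> j then F i j else 0) + (\<Sum>j<dA. if j = i then F i i else 0)"
        by (simp add: sum.distrib)
    qed
    also have "\<dots> = (\<Sum>i<dA. \<Sum>j<dA. if i \<noteq> j then F i j else 0) + (\<Sum>i<dA. F i i)"
      by (simp add: sum.distrib)
    finally show ?thesis .
  qed
  have IQ: "C_l1_IQ dA dB \<rho> \<le> (\<Sum>i<dA. \<Sum>j<dA. if i \<noteq> j then F i j else 0)"
    unfolding C_l1_IQ_def
  proof (intro sum_mono)
    fix i j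
    show "(if i \<noteq> j then trace_norm (block_B dB \<rho> i j) else 0) \<le> (if i \<noteq> j then F i j else 0)"
    proof (cases "i = j")
      case False
      have bc: "block_B dB \<rho> i j \<in> carrier_mat dB dB" unfolding block_B_def by auto
      have "trace_norm (block_B dB \<rho> i j) \<le> (\<Sum>m<dB. \<Sum>n<dB. cmod (block_B dB \<rho> i j $$ (m,n)))"
        by (rule trace_norm_bound[OF bc])
      also have "\<dots> = F i j" unfolding F_def a_def block_B_def using False by (intro sum.cong refl) auto
      finally show ?thesis using False by simp
    qed simp
  qed
  have PT: "C_l1 (ptrace_A dA dB \<rho>) \<le> (\<Sum>i<dA. F i i)"
  proof -
    have "C_l1 (ptrace_A dA dB \<rho>) = (\<Sum>m<dB. \<Sum>n<dB. if m \<noteq> n then cmod (\<Sum>i<dA. \<rho> $$ (i*dB + m, i*dB + n)) else 0)"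
      unfolding C_l1_def ptrace_A_def by (intro sum.cong refl) auto
    also have "\<dots> \<le> (\<Sum>m<dB. \<Sum>n<dB. \<Sum>i<dA. if m \<noteq> n then a i m i n else 0)"
      unfolding a_def by (intro sum_mono) (auto intro: norm_sum)
    also have "\<dots> = (\<Sum>m<dB. \<Sum>i<dA. \<Sum>n<dB. if m \<noteq> n then a i m i n else 0)"
      by (rule sum.cong[OF refl]) (rule sum.swap)
    also have "\<dots> = (\<Sum>i<dA. \<Sum>m<dB. \<Sum>n<dB. if m \<noteq> n then a i m i n else 0)"
      by (rule sum.swap)
    also have "\<dots> = (\<Sum>i<dA. F i i)"
      unfolding F_def by simp
    finally show ?thesis .
  qed
  show ?thesis using C split IQ PT by linarith
qed


end
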